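(* Let $\mathfrak{N}$ be a pseudo-Euclidean 2-step nilpotent Lie algebra with center $\mathfrak{Z}$, let $(e_1,\ldots,e_p)$ be a basis of $\mathfrak{Z}$ and let $(J_1,\ldots,J_p)$ be the associated structure endomorphisms. Define endomorphisms $F,G:\mathfrak{N}\to\mathfrak{N}$ by $$F=\frac12\sum_{i,j=1}^p\langle e_i,e_j\rangle\, J_i\circ J_j,\qquad G(u)=-\frac14\sum_{i,j=1}^p\langle e_i,u\rangle\,\mathrm{tr}(J_i\circ J_j)\,e_j .$$ Then $F$ and $G$ are symmetric with respect to $\langle\cdot,\cdot\rangle$, they do not depend on the choice of the basis $(e_1,\ldots,e_p)$ of $\mathfrak{Z}$, and $F\circ G=G\circ F=0$.
   Context: A pseudo-Euclidean Lie algebra is a finite-dimensional real Lie algebra endowed with a nondegenerate symmetric bilinear form $\langle\cdot,\cdot\rangle$ (no invariance assumed). A Lie algebra $\mathfrak{N}$ is 2-step nilpotent if $[\mathfrak{N},\mathfrak{N}]\neq 0$ and $[\mathfrak{N},\mathfrak{N}]\subset\mathfrak{Z}$, the center. Given a basis $(e_1,\ldots,e_p)$ of $\mathfrak{Z}$, the structure endomorphisms $J_1,\ldots,J_p$ are the unique endomorphisms of $\mathfrak{N}$, skew-symmetric with respect to $\langle\cdot,\cdot\rangle$, such that $[u,v]=\sum_{i=1}^p\langle J_iu,v\rangle e_i$ for all $u,v\in\mathfrak{N}$; one has $\bigcap_i\ker J_i=\mathfrak{Z}$. *)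

theory Defs
  imports "HOL-Analysis.Analysis"
begin

text \<open>The underlying finite-dimensional real vector space is a type of class
euclidean_space; its built-in inner product is used only to compute traces.
The pseudo-Euclidean metric is an arbitrary bilinear form B.\<close>

definition lie_algebra :: "('a::euclidean_space \<Rightarrow> 'a \<Rightarrow> 'a) \<Rightarrow> bool" where
  "lie_algebra br \<longleftrightarrow> bilinear br \<and> (\<forall>u. br u u = 0) \<and>
     (\<forall>u v w. br u (br v w) + br v (br w u) + br w (br u v) = 0)"

definition pseudo_euclidean_form :: "('a::euclidean_space \<Rightarrow> 'a \<Rightarrow> real) \<Rightarrow> bool" where
  "pseudo_euclidean_form B \<longleftrightarrow> bilinear B \<and> (\<forall>u v. B u v = B v u) \<and>
     (\<forall>u. (\<forall>v. B u v = 0) \<longrightarrow> u = 0)"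

definition lie_center :: "('a::euclidean_space \<Rightarrow> 'a \<Rightarrow> 'a) \<Rightarrow> 'a set" where
  "lie_center br = {z. \<forall>u. br z u = 0}"

definition two_step_nilpotent :: "('a::euclidean_space \<Rightarrow> 'a \<Rightarrow> 'a) \<Rightarrow> bool" where
  "two_step_nilpotent br \<longleftrightarrow> (\<exists>u v. br u v \<noteq> 0) \<and> (\<forall>u v. br u v \<in> lie_center br)"

definition is_basis_list :: "'a::euclidean_space set \<Rightarrow> (nat \<Rightarrow> 'a) \<Rightarrow> nat \<Rightarrow> bool" where
  "is_basis_list Z e p \<longleftrightarrow> inj_on e {..<p} \<and> independent (e ` {..<p}) \<and> span (e ` {..<p}) = Z"

definition structure_endos ::
  "('a::euclidean_space \<Rightarrow> 'a \<Rightarrow> real) \<Rightarrow> ('a \<Rightarrow> 'a \<Rightarrow> 'a) \<Rightarrow> (nat \<Rightarrow> 'a) \<Rightarrow> (nat \<Rightarrow> 'a \<Rightarrow> 'a) \<Rightarrow> nat \<Rightarrow> bool" where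
  "structure_endos B br e J p \<longleftrightarrow>
     (\<forall>i<p. linear (J i) \<and> (\<forall>u v. B (J i u) v = - B u (J i v))) \<and>
     (\<forall>u v. br u v = (\<Sum>i<p. B (J i u) v *\<^sub>R e i))"

text \<open>Trace of an endomorphism (basis independent for linear maps).\<close>
definition endo_trace :: "('a::euclidean_space \<Rightarrow> 'a) \<Rightarrow> real" where
  "endo_trace f = (\<Sum>b\<in>Basis. f b \<bullet> b)"

definition endoF ::
  "('a::euclidean_space \<Rightarrow> 'a \<Rightarrow> real) \<Rightarrow> (nat \<Rightarrow> 'a) \<Rightarrow> (nat \<Rightarrow> 'a \<Rightarrow> 'a) \<Rightarrow> nat \<Rightarrow> 'a \<Rightarrow> 'a" where
  "endoF B e J p u = (1/2) *\<^sub>R (\<Sum>i<p. \<Sum>j<p. B (e i) (e j) *\<^sub>R J i (J j u))"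

definition endoG ::
  "('a::euclidean_space \<Rightarrow> 'a \<Rightarrow> real) \<Rightarrow> (nat \<Rightarrow> 'a) \<Rightarrow> (nat \<Rightarrow> 'a \<Rightarrow> 'a) \<Rightarrow> nat \<Rightarrow> 'a \<Rightarrow> 'a" where
  "endoG B e J p u = (-1/4) *\<^sub>R (\<Sum>i<p. \<Sum>j<p. (B (e i) u * endo_trace (J i \<circ> J j)) *\<^sub>R e j)"

end

theory Submission
  imports Defs
begin

lemma B_suml: "bilinear B \<Longrightarrow> B (\<Sum>i\<in>S. f i) y = (\<Sum>i\<in>S. B (f i) y)"
  unfolding bilinear_def using linear_sum[of "\<lambda>x. B x y"] by auto

lemma B_sumr: "bilinear B \<Longrightarrow> B y (\<Sum>i\<in>S. f i) = (\<Sum>i\<in>S. B y (f i))"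
  unfolding bilinear_def using linear_sum[of "\<lambda>x. B y x"] by auto

lemma B_scl: "bilinear (B::'a::real_vector \<Rightarrow> 'b::real_vector \<Rightarrow> real) \<Longrightarrow> B (c *\<^sub>R x) y = c * B x y"
  using bilinear_lmul[of B c x y] by simp

lemma B_scr: "bilinear (B::'a::real_vector \<Rightarrow> 'b::real_vector \<Rightarrow> real) \<Longrightarrow> B x (c *\<^sub>R y) = c * B x y"
  using bilinear_rmul[of B x c y] by simp

lemma nondeg_eq:
  assumes "pseudo_euclidean_form B" "\<And>v. B x v = B y v"
  shows "x = y"
proof -
  have bl: "bilinear B" using assms(1) unfolding pseudo_euclidean_form_def by auto
  have "\<forall>v. B (x - y) v = 0" using assms(2) bilinear_lsub[OF bl] by simp
  then have "x - y = 0" using assms(1) unfolding pseudo_euclidean_form_def by blast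
  then show ?thesis by simp
qed

lemma basis_zero:
  assumes "is_basis_list Z e p" "(\<Sum>i<p. c i *\<^sub>R e i) = 0" "i < p"
  shows "c i = 0"
proof -
  have inj: "inj_on e {..<p}" and ind: "independent (e ` {..<p})"
    using assms(1) unfolding is_basis_list_def by auto
  define u where "u = (\<lambda>v. c (inv_into {..<p} e v))"
  have "(\<Sum>v\<in>e ` {..<p}. u v *\<^sub>R v) = (\<Sum>i<p. u (e i) *\<^sub>R e i)"
    using sum.reindex[OF inj] by simp
  also have "\<dots> = (\<Sum>i<p. c i *\<^sub>R e i)"
    using inj by (intro sum.cong refl) (simp add: u_def)
  finally have "(\<Sum>v\<in>e ` {..<p}. u v *\<^sub>R v) = 0" using assms(2) by simp
  then have "u (e i) = 0" using independentD[OF ind, of "e ` {..<p}" u "e i"] assms(3) by auto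
  then show ?thesis using inj assms(3) by (simp add: u_def)
qed

lemma basis_coeff_eq:
  assumes "is_basis_list Z e p" "(\<Sum>i<p. c i *\<^sub>R e i) = (\<Sum>i<p. d i *\<^sub>R e i)" "i < p"
  shows "c i = d i"
proof -
  have "(\<Sum>i<p. (c i - d i) *\<^sub>R e i) = 0"
    using assms(2) by (simp add: scaleR_left_diff_distrib sum_subtractf)
  then show ?thesis using basis_zero[OF assms(1) _ assms(3), of "\<lambda>i. c i - d i"] by simp
qed

lemma basis_span:
  assumes "is_basis_list Z e p" "z \<in> Z"
  shows "\<exists>c. z = (\<Sum>i<p. c i *\<^sub>R e i)"
proof -
  have inj: "inj_on e {..<p}" and sp: "span (e ` {..<p}) = Z"
    using assms(1) unfolding is_basis_list_def by auto
  obtain u where "z = (\<Sum>v\<in>e ` {..<p}. u v *\<^sub>R v)"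
    using assms(2) sp span_finite[of "e ` {..<p}"] by auto
  also have "\<dots> = (\<Sum>i<p. u (e i) *\<^sub>R e i)" using sum.reindex[OF inj] by simp
  finally show ?thesis by (rule exI[where x="\<lambda>i. u (e i)"])
qed

lemma sum4_swap:
  "(\<Sum>i\<in>A. \<Sum>j\<in>B. \<Sum>k\<in>C. \<Sum>l\<in>D. f i j k l) = (\<Sum>k\<in>C. \<Sum>l\<in>D. \<Sum>i\<in>A. \<Sum>j\<in>B. f i j k l)"
proof -
  have "(\<Sum>i\<in>A. \<Sum>j\<in>B. \<Sum>k\<in>C. \<Sum>l\<in>D. f i j k l) = (\<Sum>i\<in>A. \<Sum>k\<in>C. \<Sum>j\<in>B. \<Sum>l\<in>D. f i j k l)"
    by (rule sum.cong[OF refl], rule sum.swap)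
  also have "\<dots> = (\<Sum>i\<in>A. \<Sum>k\<in>C. \<Sum>l\<in>D. \<Sum>j\<in>B. f i j k l)"
    by (rule sum.cong[OF refl], rule sum.cong[OF refl], rule sum.swap)
  also have "\<dots> = (\<Sum>k\<in>C. \<Sum>i\<in>A. \<Sum>l\<in>D. \<Sum>j\<in>B. f i j k l)"
    by (rule sum.swap)
  also have "\<dots> = (\<Sum>k\<in>C. \<Sum>l\<in>D. \<Sum>i\<in>A. \<Sum>j\<in>B. f i j k l)"
    by (rule sum.cong[OF refl], rule sum.swap)
  finally show ?thesis .
qed

lemma trace_comm:
  fixes f g :: "'a::euclidean_space \<Rightarrow> 'a"
  assumes "linear f" "linear g"
  shows "endo_trace (f \<circ> g) = endo_trace (g \<circ> f)"
proof -
  have gen: "endo_trace (f \<circ> g) = (\<Sum>b\<in>Basis. \<Sum>c\<in>Basis. (g b \<bullet> c) * (f c \<bullet> b))"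
    if "linear f" for f g :: "'a \<Rightarrow> 'a"
  proof -
    have "f (g b) \<bullet> b = (\<Sum>c\<in>Basis. (g b \<bullet> c) * (f c \<bullet> b))" for b
    proof -
      have "f (g b) = f (\<Sum>c\<in>Basis. (g b \<bullet> c) *\<^sub>R c)" by (simp add: euclidean_representation)
      also have "\<dots> = (\<Sum>c\<in>Basis. (g b \<bullet> c) *\<^sub>R f c)"
        using that by (simp add: linear_sum linear_scale)
      finally show ?thesis by (simp add: inner_sum_left)
    qed
    then show ?thesis unfolding endo_trace_def by simp
  qed
  have "endo_trace (f \<circ> g) = (\<Sum>b\<in>Basis. \<Sum>c\<in>Basis. (g b \<bullet> c) * (f c \<bullet> b))"
    using gen assms by blast
  also have "\<dots> = (\<Sum>c\<in>Basis. \<Sum>b\<in>Basis. (g b \<bullet> c) * (f c \<bullet> b))" by (rule sum.swap)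
  also have "\<dots> = endo_trace (g \<circ> f)" using gen[of g f] assms by (simp add: mult.commute)
  finally show ?thesis .
qed


lemma J_center:
  assumes pe: "pseudo_euclidean_form B" and bas: "is_basis_list Z e p"
    and se: "structure_endos B br e J p" and z: "\<forall>v. br z v = 0" and i: "i < p"
  shows "J i z = 0"
proof -
  have bl: "bilinear B" using pe unfolding pseudo_euclidean_form_def by auto
  have "B (J i z) v = B 0 v" for v
  proof -
    have "(\<Sum>i<p. B (J i z) v *\<^sub>R e i) = 0" using se z unfolding structure_endos_def by auto
    then have "B (J i z) v = 0" using basis_zero[OF bas _ i, of "\<lambda>i. B (J i z) v"] by simp
    then show ?thesis using bilinear_lzero[OF bl] by simp
  qed
  then show ?thesis using nondeg_eq[OF pe] by blast
qed

lemma J_change: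
  assumes pe: "pseudo_euclidean_form B" and bas: "is_basis_list Z e p"
    and se: "structure_endos B br e J p" and se': "structure_endos B br e' J' p'"
    and P: "\<forall>k<p'. e' k = (\<Sum>i<p. P k i *\<^sub>R e i)" and i: "i < p"
  shows "J i x = (\<Sum>k<p'. P k i *\<^sub>R J' k x)"
proof -
  have bl: "bilinear B" using pe unfolding pseudo_euclidean_form_def by auto
  have "B (J i x) v = B (\<Sum>k<p'. P k i *\<^sub>R J' k x) v" for v
  proof -
    have "(\<Sum>i<p. B (J i x) v *\<^sub>R e i) = br x v" using se unfolding structure_endos_def by auto
    also have "\<dots> = (\<Sum>k<p'. B (J' k x) v *\<^sub>R e' k)" using se' unfolding structure_endos_def by auto
    also have "\<dots> = (\<Sum>k<p'. B (J' k x) v *\<^sub>R (\<Sum>i<p. P k i *\<^sub>R e i))"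
      using P by (intro sum.cong refl) auto
    also have "\<dots> = (\<Sum>k<p'. \<Sum>i<p. (B (J' k x) v * P k i) *\<^sub>R e i)"
      by (simp add: scaleR_sum_right)
    also have "\<dots> = (\<Sum>i<p. \<Sum>k<p'. (B (J' k x) v * P k i) *\<^sub>R e i)" by (rule sum.swap)
    also have "\<dots> = (\<Sum>i<p. (\<Sum>k<p'. B (J' k x) v * P k i) *\<^sub>R e i)"
      by (simp add: scaleR_sum_left)
    finally have eq: "(\<Sum>i<p. B (J i x) v *\<^sub>R e i) = (\<Sum>i<p. (\<Sum>k<p'. B (J' k x) v * P k i) *\<^sub>R e i)" .
    have "B (J i x) v = (\<Sum>k<p'. B (J' k x) v * P k i)"
      using basis_coeff_eq[OF bas eq i] by simp
    also have "\<dots> = B (\<Sum>k<p'. P k i *\<^sub>R J' k x) v"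
      by (simp add: B_suml[OF bl] B_scl[OF bl] mult.commute)
    finally show ?thesis .
  qed
  then show ?thesis using nondeg_eq[OF pe] by blast
qed

lemma JJ_change:
  assumes pe: "pseudo_euclidean_form B" and bas: "is_basis_list Z e p"
    and se: "structure_endos B br e J p" and se': "structure_endos B br e' J' p'"
    and P: "\<forall>k<p'. e' k = (\<Sum>i<p. P k i *\<^sub>R e i)" and i: "i < p" and j: "j < p"
  shows "J i (J j x) = (\<Sum>k<p'. \<Sum>l<p'. (P k i * P l j) *\<^sub>R J' k (J' l x))"
proof -
  have lin: "linear (J' k)" if "k < p'" for k using se' that unfolding structure_endos_def by auto
  have "J i (J j x) = (\<Sum>k<p'. P k i *\<^sub>R J' k (\<Sum>l<p'. P l j *\<^sub>R J' l x))"
    using J_change[OF pe bas se se' P i] J_change[OF pe bas se se' P j] by simp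
  also have "\<dots> = (\<Sum>k<p'. \<Sum>l<p'. (P k i * P l j) *\<^sub>R J' k (J' l x))"
    using lin by (intro sum.cong refl) (simp add: linear_sum linear_scale scaleR_sum_right)
  finally show ?thesis .
qed

lemma F_change:
  assumes pe: "pseudo_euclidean_form B" and bas: "is_basis_list Z e p"
    and se: "structure_endos B br e J p" and se': "structure_endos B br e' J' p'"
    and P: "\<forall>k<p'. e' k = (\<Sum>i<p. P k i *\<^sub>R e i)"
  shows "endoF B e' J' p' u = endoF B e J p u"
proof -
  have bl: "bilinear B" using pe unfolding pseudo_euclidean_form_def by auto
  have Bee: "B (e' k) (e' l) = (\<Sum>i<p. \<Sum>j<p. B (e i) (e j) * P k i * P l j)"
    if "k < p'" "l < p'" for k l
  proof -
    have "B (e' k) (e' l) = (\<Sum>j<p. \<Sum>i<p. B (e i) (e j) * P k i * P l j)"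
      using P that by (simp add: B_suml[OF bl] B_sumr[OF bl] B_scl[OF bl] B_scr[OF bl]
        sum_distrib_left mult.commute mult.left_commute)
    also have "\<dots> = (\<Sum>i<p. \<Sum>j<p. B (e i) (e j) * P k i * P l j)" by (rule sum.swap)
    finally show ?thesis .
  qed
  have "(\<Sum>i<p. \<Sum>j<p. B (e i) (e j) *\<^sub>R J i (J j u))
      = (\<Sum>i<p. \<Sum>j<p. \<Sum>k<p'. \<Sum>l<p'. (B (e i) (e j) * P k i * P l j) *\<^sub>R J' k (J' l u))"
    using JJ_change[OF pe bas se se' P]
    by (intro sum.cong refl) (simp add: scaleR_sum_right mult.assoc)
  also have "\<dots> = (\<Sum>k<p'. \<Sum>l<p'. \<Sum>i<p. \<Sum>j<p. (B (e i) (e j) * P k i * P l j) *\<^sub>R J' k (J' l u))"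
    by (rule sum4_swap)
  also have "\<dots> = (\<Sum>k<p'. \<Sum>l<p'. B (e' k) (e' l) *\<^sub>R J' k (J' l u))"
    using Bee by (intro sum.cong refl) (simp add: scaleR_sum_left)
  finally show ?thesis unfolding endoF_def by simp
qed

lemma G_change:
  assumes pe: "pseudo_euclidean_form B" and bas: "is_basis_list Z e p"
    and se: "structure_endos B br e J p" and se': "structure_endos B br e' J' p'"
    and P: "\<forall>k<p'. e' k = (\<Sum>i<p. P k i *\<^sub>R e i)"
  shows "endoG B e' J' p' u = endoG B e J p u"
proof -
  have bl: "bilinear B" using pe unfolding pseudo_euclidean_form_def by auto
  have tr: "endo_trace (J i \<circ> J j) = (\<Sum>k<p'. \<Sum>l<p'. P k i * P l j * endo_trace (J' k \<circ> J' l))"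
    if "i < p" "j < p" for i j
  proof -
    have "endo_trace (J i \<circ> J j) = (\<Sum>b\<in>Basis. \<Sum>k<p'. \<Sum>l<p'. P k i * P l j * (J' k (J' l b) \<bullet> b))"
      unfolding endo_trace_def using JJ_change[OF pe bas se se' P that]
      by (simp add: inner_sum_left mult.assoc)
    also have "\<dots> = (\<Sum>k<p'. \<Sum>b\<in>Basis. \<Sum>l<p'. P k i * P l j * (J' k (J' l b) \<bullet> b))"
      by (rule sum.swap)
    also have "\<dots> = (\<Sum>k<p'. \<Sum>l<p'. \<Sum>b\<in>Basis. P k i * P l j * (J' k (J' l b) \<bullet> b))"
      by (rule sum.cong[OF refl], rule sum.swap)
    also have "\<dots> = (\<Sum>k<p'. \<Sum>l<p'. P k i * P l j * endo_trace (J' k \<circ> J' l))"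
      unfolding endo_trace_def by (simp add: sum_distrib_left)
    finally show ?thesis .
  qed
  have "(\<Sum>k<p'. \<Sum>l<p'. (B (e' k) u * endo_trace (J' k \<circ> J' l)) *\<^sub>R e' l)
      = (\<Sum>k<p'. \<Sum>l<p'. \<Sum>j<p. \<Sum>i<p. (P k i * B (e i) u * endo_trace (J' k \<circ> J' l) * P l j) *\<^sub>R e j)"
    using P by (intro sum.cong refl)
      (simp add: B_suml[OF bl] B_scl[OF bl] scaleR_sum_right scaleR_sum_left sum_distrib_right)
  also have "\<dots> = (\<Sum>j<p. \<Sum>i<p. \<Sum>k<p'. \<Sum>l<p'. (P k i * B (e i) u * endo_trace (J' k \<circ> J' l) * P l j) *\<^sub>R e j)"
    by (rule sum4_swap[symmetric])
  also have "\<dots> = (\<Sum>i<p. \<Sum>j<p. \<Sum>k<p'. \<Sum>l<p'. (P k i * B (e i) u * endo_trace (J' k \<circ> J' l) * P l j) *\<^sub>R e j)"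
    by (rule sum.swap)
  also have "\<dots> = (\<Sum>i<p. \<Sum>j<p. (B (e i) u * endo_trace (J i \<circ> J j)) *\<^sub>R e j)"
    using tr by (intro sum.cong refl)
      (simp add: scaleR_sum_left sum_distrib_left sum_distrib_right mult.commute mult.left_commute)
  finally show ?thesis unfolding endoG_def by simp
qed

theorem mainTheorem2:
  fixes br :: "'a::euclidean_space \<Rightarrow> 'a \<Rightarrow> 'a"
    and B :: "'a \<Rightarrow> 'a \<Rightarrow> real"
    and e :: "nat \<Rightarrow> 'a" and J :: "nat \<Rightarrow> 'a \<Rightarrow> 'a" and p :: nat
  assumes "lie_algebra br"
    and "pseudo_euclidean_form B"
    and "two_step_nilpotent br"
    and "is_basis_list (lie_center br) e p"
    and "structure_endos B br e J p"
  shows "(\<forall>u v. B (endoF B e J p u) v = B u (endoF B e J p v))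
    \<and> (\<forall>u v. B (endoG B e J p u) v = B u (endoG B e J p v))
    \<and> (\<forall>(e' :: nat \<Rightarrow> 'a) (J' :: nat \<Rightarrow> 'a \<Rightarrow> 'a) (p' :: nat).
          is_basis_list (lie_center br) e' p' \<and> structure_endos B br e' J' p' \<longrightarrow>
          endoF B e' J' p' = endoF B e J p \<and> endoG B e' J' p' = endoG B e J p)
    \<and> endoF B e J p \<circ> endoG B e J p = (\<lambda>u. 0)
    \<and> endoG B e J p \<circ> endoF B e J p = (\<lambda>u. 0)"
proof -
  note pe = assms(2) and bas = assms(4) and se = assms(5)
  have bl: "bilinear B" and Bsym: "\<And>x y. B x y = B y x"
    using pe unfolding pseudo_euclidean_form_def by auto
  have Jlin: "\<And>i. i < p \<Longrightarrow> linear (J i)" and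
    Jsk: "\<And>i x y. i < p \<Longrightarrow> B (J i x) y = - B x (J i y)"
    using se unfolding structure_endos_def by auto
  have J0: "\<And>i. i < p \<Longrightarrow> J i 0 = 0" using Jlin linear_0 by blast
  have ecen: "\<forall>v. br (e k) v = 0" if "k < p" for k
  proof -
    have "e k \<in> span (e ` {..<p})" using that by (intro span_base) auto
    then show ?thesis using bas unfolding is_basis_list_def lie_center_def by auto
  qed
  have Jz: "J i (e k) = 0" if "i < p" "k < p" for i k
    using J_center[OF pe bas se ecen[OF that(2)] that(1)] .
  have eJ: "B (e i) (J k y) = 0" if "i < p" "k < p" for i k y
  proof -
    have "B (J k (e i)) y = - B (e i) (J k y)" using Jsk that by blast
    then show ?thesis using Jz[OF that(2,1)] bilinear_lzero[OF bl] by simp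
  qed
  define T where "T i j = endo_trace (J i \<circ> J j)" for i j
  have Tsym: "T i j = T j i" if "i < p" "j < p" for i j
    unfolding T_def using trace_comm[OF Jlin[OF that(1)] Jlin[OF that(2)]] .
  have c1: "\<forall>u v. B (endoF B e J p u) v = B u (endoF B e J p v)"
  proof (intro allI)
    fix u v
    have "B (endoF B e J p u) v = 1/2 * (\<Sum>i<p. \<Sum>j<p. B (e i) (e j) * B (J i (J j u)) v)"
      by (simp add: endoF_def B_scl[OF bl] B_suml[OF bl])
    also have "\<dots> = 1/2 * (\<Sum>i<p. \<Sum>j<p. B (e j) (e i) * B u (J j (J i v)))"
    proof (intro arg_cong[where f="\<lambda>x. 1/2*x"] sum.cong refl)
      fix i j assume "i \<in> {..<p}" "j \<in> {..<p}"
      then have ij: "i < p" "j < p" by auto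
      have "B (J i (J j u)) v = - B (J j u) (J i v)" using Jsk[OF ij(1)] by blast
      also have "\<dots> = B u (J j (J i v))" using Jsk[OF ij(2)] by simp
      finally show "B (e i) (e j) * B (J i (J j u)) v = B (e j) (e i) * B u (J j (J i v))"
        using Bsym[of "e i" "e j"] by simp
    qed
    also have "\<dots> = 1/2 * (\<Sum>j<p. \<Sum>i<p. B (e j) (e i) * B u (J j (J i v)))"
      by (rule arg_cong[where f="\<lambda>x. 1/2*x"], rule sum.swap)
    also have "\<dots> = B u (endoF B e J p v)"
      by (simp add: endoF_def B_scr[OF bl] B_sumr[OF bl])
    finally show "B (endoF B e J p u) v = B u (endoF B e J p v)" .
  qed
  have c2: "\<forall>u v. B (endoG B e J p u) v = B u (endoG B e J p v)"
  proof (intro allI)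
    fix u v
    have "B (endoG B e J p u) v = -1/4 * (\<Sum>i<p. \<Sum>j<p. B (e i) u * T i j * B (e j) v)"
      unfolding endoG_def B_scl[OF bl] by (simp add: B_scl[OF bl] B_suml[OF bl] T_def)
    also have "\<dots> = -1/4 * (\<Sum>j<p. \<Sum>i<p. B (e i) u * T i j * B (e j) v)"
      by (rule arg_cong[where f="\<lambda>x. -1/4*x"], rule sum.swap)
    also have "\<dots> = -1/4 * (\<Sum>j<p. \<Sum>i<p. B (e j) v * T j i * B u (e i))"
    proof (intro arg_cong[where f="\<lambda>x. -1/4*x"] sum.cong refl)
      fix i j assume "i \<in> {..<p}" "j \<in> {..<p}"
      then have ij: "i < p" "j < p" by auto
      show "B (e i) u * T i j * B (e j) v = B (e j) v * T j i * B u (e i)"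
        using Tsym[OF ij] Bsym[of "e i" u] by simp
    qed
    also have "\<dots> = B u (endoG B e J p v)"
      unfolding endoG_def B_scr[OF bl] by (simp add: B_scr[OF bl] B_sumr[OF bl] T_def mult.commute mult.left_commute)
    finally show "B (endoG B e J p u) v = B u (endoG B e J p v)" .
  qed
  have c3: "\<forall>(e' :: nat \<Rightarrow> 'a) (J' :: nat \<Rightarrow> 'a \<Rightarrow> 'a) (p' :: nat).
          is_basis_list (lie_center br) e' p' \<and> structure_endos B br e' J' p' \<longrightarrow>
          endoF B e' J' p' = endoF B e J p \<and> endoG B e' J' p' = endoG B e J p"
  proof (intro allI impI)
    fix e' :: "nat \<Rightarrow> 'a" and J' :: "nat \<Rightarrow> 'a \<Rightarrow> 'a" and p' :: nat
    assume h: "is_basis_list (lie_center br) e' p' \<and> structure_endos B br e' J' p'"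
    have "\<forall>k. \<exists>c. k < p' \<longrightarrow> e' k = (\<Sum>i<p. c i *\<^sub>R e i)"
    proof
      fix k
      show "\<exists>c. k < p' \<longrightarrow> e' k = (\<Sum>i<p. c i *\<^sub>R e i)"
      proof (cases "k < p'")
        case True
        have "e' k \<in> span (e' ` {..<p'})" using True by (intro span_base) auto
        then have "e' k \<in> lie_center br" using h unfolding is_basis_list_def by auto
        then show ?thesis using basis_span[OF bas] by blast
      qed auto
    qed
    then obtain P where P: "\<forall>k<p'. e' k = (\<Sum>i<p. P k i *\<^sub>R e i)"
      by (metis (no_types) choice)
    show "endoF B e' J' p' = endoF B e J p \<and> endoG B e' J' p' = endoG B e J p"
      using F_change[OF pe bas se _ P] G_change[OF pe bas se _ P] h by auto
  qed
  have JG: "J m (endoG B e J p u) = 0" if "m < p" for m u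
    using Jlin[OF that] Jz[OF that]
    by (simp add: endoG_def linear_sum linear_scale linear_neg)
  have c4: "endoF B e J p \<circ> endoG B e J p = (\<lambda>u. 0)"
    by (rule ext) (simp add: endoF_def JG J0)
  have c5: "endoG B e J p \<circ> endoF B e J p = (\<lambda>u. 0)"
  proof (rule ext)
    fix u
    have "B (e i) (endoF B e J p u) = 0" if "i < p" for i
      using that by (simp add: endoF_def B_scr[OF bl] B_sumr[OF bl] eJ)
    then show "(endoG B e J p \<circ> endoF B e J p) u = 0"
      by (simp add: endoG_def)
  qed
  show ?thesis using c1 c2 c3 c4 c5 by blast
qed

end
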